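(* Let $\bm{G}_t\in\mathbb{R}^{n_1\times n_2}$, $\epsilon_t>0$, $\bm{L}_t=\epsilon_t\bm{I}_{n_1}+\mathrm{diag}(\bm{G}_t\bm{G}_t^T)$, $\bm{R}_t=\epsilon_t\bm{I}_{n_2}+\mathrm{diag}(\bm{G}_t^T\bm{G}_t)$, $\nu_t=\epsilon_t^{1/2}$, $\mu_t=(\epsilon_t+\|\bm{G}_t\|_\vee^2)^{1/2}$. Let $\bm{Z}_1,\bm{Z}_2\in\mathbb{R}^{n_1\times n_2}$ have ranks $r_1$ and $r_2$ with $r_1+r_2\le\min\{n_1,n_2\}$ and $\langle\bm{Z}_1,\bm{Z}_2\rangle_{\mathcal{W}_t}=0$. Assume the linear operator $\mathcal{A}:\mathbb{R}^{n_1\times n_2}\to\mathbb{R}^m$ satisfies the restricted isometry property of order $r_1+r_2$ with constant $\delta_{r_1+r_2}$. Then $$|\langle\mathcal{A}\bm{Z}_1,\mathcal{A}\bm{Z}_2\rangle|\le\frac12\Big((\nu_t^{-1}-\mu_t^{-1})+(\nu_t^{-1}+\mu_t^{-1})\delta_{r_1+r_2}\Big)\|\bm{Z}_1\|_{\mathcal{W}_t}\|\bm{Z}_2\|_{\mathcal{W}_t}.$$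
   Context: Restricted isometry property of order $s$: there is $\delta_s\in(0,1)$ with $(1-\delta_s)\|\bm{Z}\|_F^2\le\|\mathcal{A}\bm{Z}\|_2^2\le(1+\delta_s)\|\bm{Z}\|_F^2$ for all $\bm{Z}$ of rank at most $s$. $\langle\bm{Z},\bm{Y}\rangle_{\mathcal{W}_t}=\langle\bm{L}_t^{1/4}\bm{Z}\bm{R}_t^{1/4},\bm{Y}\rangle$ with $\langle\bm{A},\bm{B}\rangle=\mathrm{trace}(\bm{A}^T\bm{B})$; $\|\cdot\|_{\mathcal{W}_t}$ is the induced norm. $\|\bm{Z}\|_\vee=\max\{\max_i\|\bm{Z}(i,:)\|_2,\max_j\|\bm{Z}(:,j)\|_2\}$. *)

theory Defs
  imports "HOL-Analysis.Analysis"
begin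

text \<open>Matrices in R^(n1 x n2) are represented as real^'n2^'n1 (rows indexed by 'n1).\<close>

definition diag_mat :: "('n::finite \<Rightarrow> real) \<Rightarrow> real^'n^'n" where
  "diag_mat d = (\<chi> i j. if i = j then d i else 0)"

definition diag_part :: "real^'n::finite^'n \<Rightarrow> real^'n^'n" where
  "diag_part M = diag_mat (\<lambda>i. M $ i $ i)"

text \<open>Real power of a diagonal matrix with positive diagonal (the only case used).\<close>
definition diag_powr :: "real^'n::finite^'n \<Rightarrow> real \<Rightarrow> real^'n^'n" where
  "diag_powr M p = diag_mat (\<lambda>i. (M $ i $ i) powr p)"

definition frob_inner :: "real^'n2::finite^'n1::finite \<Rightarrow> real^'n2^'n1 \<Rightarrow> real" where
  "frob_inner A B = trace (transpose A ** B)"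

definition frob_norm :: "real^'n2::finite^'n1::finite \<Rightarrow> real" where
  "frob_norm Z = sqrt (frob_inner Z Z)"

definition Lmat :: "real \<Rightarrow> real^'n2::finite^'n1::finite \<Rightarrow> real^'n1^'n1" where
  "Lmat eps G = eps *\<^sub>R mat 1 + diag_part (G ** transpose G)"

definition Rmat :: "real \<Rightarrow> real^'n2::finite^'n1::finite \<Rightarrow> real^'n2^'n2" where
  "Rmat eps G = eps *\<^sub>R mat 1 + diag_part (transpose G ** G)"

definition W_inner :: "real \<Rightarrow> real^'n2::finite^'n1::finite \<Rightarrow> real^'n2^'n1 \<Rightarrow> real^'n2^'n1 \<Rightarrow> real" where
  "W_inner eps G Z Y =
     frob_inner (diag_powr (Lmat eps G) (1/4) ** Z ** diag_powr (Rmat eps G) (1/4)) Y"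

definition W_norm :: "real \<Rightarrow> real^'n2::finite^'n1::finite \<Rightarrow> real^'n2^'n1 \<Rightarrow> real" where
  "W_norm eps G Z = sqrt (W_inner eps G Z Z)"

definition vee_norm :: "real^'n2::finite^'n1::finite \<Rightarrow> real" where
  "vee_norm Z = max (Max (range (\<lambda>i. norm (row i Z)))) (Max (range (\<lambda>j. norm (column j Z))))"

definition RIP :: "(real^'n2::finite^'n1::finite \<Rightarrow> real^'m::finite) \<Rightarrow> nat \<Rightarrow> real \<Rightarrow> bool" where
  "RIP A s \<delta> \<longleftrightarrow> 0 < \<delta> \<and> \<delta> < 1 \<and>
     (\<forall>Z. rank Z \<le> s \<longrightarrow>
        (1 - \<delta>) * (frob_norm Z)\<^sup>2 \<le> (norm (A Z))\<^sup>2 \<and>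
        (norm (A Z))\<^sup>2 \<le> (1 + \<delta>) * (frob_norm Z)\<^sup>2)"

end

theory Submission imports Defs begin

lemma diag_mult_left: "(diag_mat d ** Z) $ i $ j = d i * Z $ i $ j"
  unfolding matrix_matrix_mult_def diag_mat_def
  by (auto simp: if_distrib if_distribR sum.delta'[OF finite] cong: if_cong)

lemma diag_mult_right: "(Z ** diag_mat d) $ i $ j = Z $ i $ j * d j"
  by (simp add: diag_mat_def matrix_matrix_mult_def if_distrib cong: if_cong)

lemma row_add: "row i (A + B) = row i A + row i B"
  by (simp add: row_def vec_eq_iff)

lemma rank_add_le: "rank ((A::real^'n::finite^'m::finite) + B) \<le> rank A + rank B"
proof -
  have "rows (A + B) \<subseteq> {x + y |x y. x \<in> span (rows A) \<and> y \<in> span (rows B)}"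
  proof
    fix x assume "x \<in> rows (A + B)"
    then obtain i where "x = row i (A + B)" by (auto simp: rows_def)
    then have "x = row i A + row i B" by (simp add: row_add)
    moreover have "row i A \<in> span (rows A)" "row i B \<in> span (rows B)"
      by (auto simp: rows_def intro!: span_base)
    ultimately show "x \<in> {x + y |x y. x \<in> span (rows A) \<and> y \<in> span (rows B)}" by blast
  qed
  then have "rank (A+B) \<le> dim {x + y |x y. x \<in> span (rows A) \<and> y \<in> span (rows B)}"
    unfolding row_rank_def by (rule dim_subset)
  also have "\<dots> \<le> dim (span (rows A)) + dim (span (rows B))"
    using dim_sums_Int[OF subspace_span subspace_span, of "rows A" "rows B"] by linarith
  finally show ?thesis by (simp add: row_rank_def)
qed

lemma rank_scale_le: "rank (c *\<^sub>R (A::real^'n::finite^'m::finite)) \<le> rank A"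
proof -
  have "c *\<^sub>R A = (c *\<^sub>R mat 1) ** A"
    by (metis matrix_mul_lid scalar_matrix_assoc)
  then show ?thesis using rank_mul_le_right by metis
qed


lemma frob_inner_sum: "frob_inner X Y = (\<Sum>i\<in>UNIV. \<Sum>j\<in>UNIV. X$i$j * Y$i$j)"
proof -
  have "frob_inner X Y = (\<Sum>j\<in>UNIV. \<Sum>i\<in>UNIV. X$i$j * Y$i$j)"
    unfolding frob_inner_def trace_def matrix_matrix_mult_def transpose_def by simp
  also have "\<dots> = (\<Sum>i\<in>UNIV. \<Sum>j\<in>UNIV. X$i$j * Y$i$j)" by (rule sum.swap)
  finally show ?thesis .
qed

lemma W_inner_sum: "W_inner eps G Z Y = (\<Sum>i\<in>UNIV. \<Sum>j\<in>UNIV.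
   ((Lmat eps G $ i $ i) powr (1/4) * (Rmat eps G $ j $ j) powr (1/4)) * Z$i$j * Y$i$j)"
  unfolding W_inner_def frob_inner_sum diag_powr_def
  by (simp add: diag_mult_left diag_mult_right mult_ac)

lemma Lmat_diag: "Lmat eps G $ i $ i = eps + (norm (row i G))\<^sup>2"
  by (simp add: Lmat_def diag_part_def diag_mat_def mat_def matrix_matrix_mult_def transpose_def
     power2_norm_eq_inner inner_vec_def row_def)

lemma Rmat_diag: "Rmat eps G $ j $ j = eps + (norm (column j G))\<^sup>2"
  by (simp add: Rmat_def diag_part_def diag_mat_def mat_def matrix_matrix_mult_def transpose_def
     power2_norm_eq_inner inner_vec_def column_def)

lemma row_le_vee: "norm (row i G) \<le> vee_norm G"
  unfolding vee_norm_def by (rule max.coboundedI1) (rule Max_ge, auto)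

lemma col_le_vee: "norm (column j G) \<le> vee_norm G"
  unfolding vee_norm_def by (rule max.coboundedI2) (rule Max_ge, auto)

lemma w_bounds:
  assumes "eps > 0"
  shows "sqrt eps \<le> (Lmat eps G $ i $ i) powr (1/4) * (Rmat eps G $ j $ j) powr (1/4)"
    and "(Lmat eps G $ i $ i) powr (1/4) * (Rmat eps G $ j $ j) powr (1/4) \<le> sqrt (eps + (vee_norm G)\<^sup>2)"
proof -
  let ?l = "Lmat eps G $ i $ i" and ?r = "Rmat eps G $ j $ j" and ?M = "eps + (vee_norm G)\<^sup>2"
  have l1: "eps \<le> ?l" and r1: "eps \<le> ?r" by (simp_all add: Lmat_diag Rmat_diag)
  have l2: "?l \<le> ?M" unfolding Lmat_diag
    using power_mono[OF row_le_vee[of i G] norm_ge_zero] by simp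
  have r2: "?r \<le> ?M" unfolding Rmat_diag
    using power_mono[OF col_le_vee[of j G] norm_ge_zero] by simp
  have "sqrt eps = eps powr (1/4) * eps powr (1/4)"
    using assms by (simp add: powr_add[symmetric] powr_half_sqrt)
  also have "\<dots> \<le> ?l powr (1/4) * ?r powr (1/4)"
    using assms l1 r1 by (intro mult_mono powr_mono2) auto
  finally show "sqrt eps \<le> ?l powr (1/4) * ?r powr (1/4)" .
  have "?l powr (1/4) * ?r powr (1/4) \<le> ?M powr (1/4) * ?M powr (1/4)"
    using assms l1 r1 l2 r2 by (intro mult_mono powr_mono2) auto
  also have "\<dots> = sqrt ?M"
    using assms by (simp add: powr_add[symmetric] powr_half_sqrt add_pos_nonneg)
  finally show "?l powr (1/4) * ?r powr (1/4) \<le> sqrt ?M" .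
qed

lemma quad_sum:
  fixes w :: "'a \<Rightarrow> 'b \<Rightarrow> real"
  shows "(\<Sum>i\<in>I. \<Sum>j\<in>J. w i j * (x * Z i j + y * Y i j) * (x * Z i j + y * Y i j)) =
    x\<^sup>2 * (\<Sum>i\<in>I. \<Sum>j\<in>J. w i j * Z i j * Z i j) + y\<^sup>2 * (\<Sum>i\<in>I. \<Sum>j\<in>J. w i j * Y i j * Y i j)
    + 2 * x * y * (\<Sum>i\<in>I. \<Sum>j\<in>J. w i j * Z i j * Y i j)"
proof -
  have "\<And>i j. w i j * (x * Z i j + y * Y i j) * (x * Z i j + y * Y i j) =
     x\<^sup>2 * (w i j * Z i j * Z i j) + y\<^sup>2 * (w i j * Y i j * Y i j) + 2 * x * y * (w i j * Z i j * Y i j)"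
    by (simp add: power2_eq_square) algebra
  then have "(\<Sum>i\<in>I. \<Sum>j\<in>J. w i j * (x * Z i j + y * Y i j) * (x * Z i j + y * Y i j)) =
    (\<Sum>i\<in>I. \<Sum>j\<in>J. x\<^sup>2 * (w i j * Z i j * Z i j) + y\<^sup>2 * (w i j * Y i j * Y i j) + 2 * x * y * (w i j * Z i j * Y i j))"
    by presburger
  also have "\<dots> = x\<^sup>2 * (\<Sum>i\<in>I. \<Sum>j\<in>J. w i j * Z i j * Z i j) + y\<^sup>2 * (\<Sum>i\<in>I. \<Sum>j\<in>J. w i j * Y i j * Y i j)
    + 2 * x * y * (\<Sum>i\<in>I. \<Sum>j\<in>J. w i j * Z i j * Y i j)"
    by (simp only: sum.distrib sum_distrib_left)
  finally show ?thesis .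
qed

lemma sum_bounds:
  fixes w :: "'a \<Rightarrow> 'b \<Rightarrow> real"
  assumes "\<And>i j. lo \<le> w i j" "\<And>i j. w i j \<le> hi"
  shows "lo * (\<Sum>i\<in>I. \<Sum>j\<in>J. Z i j * Z i j) \<le> (\<Sum>i\<in>I. \<Sum>j\<in>J. w i j * Z i j * Z i j)"
    and "(\<Sum>i\<in>I. \<Sum>j\<in>J. w i j * Z i j * Z i j) \<le> hi * (\<Sum>i\<in>I. \<Sum>j\<in>J. Z i j * Z i j)"
proof -
  show "lo * (\<Sum>i\<in>I. \<Sum>j\<in>J. Z i j * Z i j) \<le> (\<Sum>i\<in>I. \<Sum>j\<in>J. w i j * Z i j * Z i j)"
    unfolding sum_distrib_left
    by (intro sum_mono) (simp add: mult.assoc mult_right_mono assms)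
  show "(\<Sum>i\<in>I. \<Sum>j\<in>J. w i j * Z i j * Z i j) \<le> hi * (\<Sum>i\<in>I. \<Sum>j\<in>J. Z i j * Z i j)"
    unfolding sum_distrib_left
    by (intro sum_mono) (simp add: mult.assoc mult_right_mono assms)
qed

lemma norm_diff_sq:
  fixes X Y :: "'a::real_inner"
  shows "(norm (b *\<^sub>R X + a *\<^sub>R Y))\<^sup>2 - (norm (b *\<^sub>R X + (-a) *\<^sub>R Y))\<^sup>2 = 4 * a * b * inner X Y"
proof -
  have e: "(norm (b *\<^sub>R X + c *\<^sub>R Y))\<^sup>2 = b*b*inner X X + 2*b*c*inner X Y + c*c*inner Y Y" for c
    unfolding power2_norm_eq_inner inner_add_left inner_add_right inner_scaleR_left inner_scaleR_right
      inner_commute[of Y X] by (simp add: algebra_simps)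
  show ?thesis unfolding e by (simp add: algebra_simps)
qed

theorem lemma3p8:
  fixes G Z1 Z2 :: "real^'n2::finite^'n1::finite"
    and A :: "real^'n2^'n1 \<Rightarrow> real^'m::finite"
    and eps \<delta> :: real and r1 r2 :: nat
  assumes "eps > 0"
    and "rank Z1 = r1" and "rank Z2 = r2"
    and "r1 + r2 \<le> min CARD('n1) CARD('n2)"
    and "W_inner eps G Z1 Z2 = 0"
    and "linear A"
    and "RIP A (r1 + r2) \<delta>"
  shows "let \<nu> = sqrt eps; \<mu> = sqrt (eps + (vee_norm G)\<^sup>2) in
    \<bar>inner (A Z1) (A Z2)\<bar> \<le>
      1/2 * ((1/\<nu> - 1/\<mu>) + (1/\<nu> + 1/\<mu>) * \<delta>) * W_norm eps G Z1 * W_norm eps G Z2"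
proof -
  define \<nu> where "\<nu> = sqrt eps"
  define \<mu> where "\<mu> = sqrt (eps + (vee_norm G)\<^sup>2)"
  define w where "w i j = (Lmat eps G $ i $ i) powr (1/4) * (Rmat eps G $ j $ j) powr (1/4)" for i j
  define Ws where "Ws Z Y = (\<Sum>i\<in>UNIV. \<Sum>j\<in>UNIV. w i j * Z$i$j * Y$i$j)" for Z Y :: "real^'n2^'n1"
  define F where "F Z = (\<Sum>i\<in>UNIV. \<Sum>j\<in>UNIV. Z$i$j * Z$i$j)" for Z :: "real^'n2^'n1"
  have nupos: "\<nu> > 0" using assms(1) by (simp add: \<nu>_def)
  have nu_mu: "\<nu> \<le> \<mu>" unfolding \<nu>_def \<mu>_def by simp
  have mupos: "\<mu> > 0" using nupos nu_mu by linarith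
  have wlo: "\<nu> \<le> w i j" and whi: "w i j \<le> \<mu>" for i j
    using w_bounds[OF assms(1)] by (simp_all add: w_def \<nu>_def \<mu>_def)
  have WW: "W_inner eps G Z Y = Ws Z Y" for Z Y
    by (simp add: W_inner_sum Ws_def w_def)
  have Wlo: "\<nu> * F Z \<le> Ws Z Z" and Whi: "Ws Z Z \<le> \<mu> * F Z" for Z
    unfolding Ws_def F_def using sum_bounds[of \<nu> w \<mu>, OF wlo whi] by auto
  have Fnn: "0 \<le> F Z" for Z unfolding F_def by (intro sum_nonneg) auto
  have frob: "(frob_norm Z)\<^sup>2 = F Z" for Z
    using Fnn[of Z] by (simp add: frob_norm_def frob_inner_sum F_def)
  have Wnn: "0 \<le> Ws Z Z" for Z using Wlo[of Z] Fnn[of Z] nupos by (meson mult_nonneg_nonneg less_le order_trans)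
  have quad: "Ws (x *\<^sub>R Z + y *\<^sub>R Y) (x *\<^sub>R Z + y *\<^sub>R Y) = x\<^sup>2 * Ws Z Z + y\<^sup>2 * Ws Y Y + 2 * x * y * Ws Z Y"
    for x y Z Y
    unfolding Ws_def using quad_sum[of w x "\<lambda>i j. Z$i$j" y "\<lambda>i j. Y$i$j" UNIV UNIV] by simp
  have rip: "0 < \<delta>" "\<delta> < 1" "\<And>Z. rank Z \<le> r1 + r2 \<Longrightarrow> (1 - \<delta>) * F Z \<le> (norm (A Z))\<^sup>2 \<and> (norm (A Z))\<^sup>2 \<le> (1 + \<delta>) * F Z"
    using assms(7) unfolding RIP_def frob by auto
  have rk: "rank (x *\<^sub>R Z1 + y *\<^sub>R Z2) \<le> r1 + r2" for x y
    using rank_add_le[of "x *\<^sub>R Z1" "y *\<^sub>R Z2"] rank_scale_le[of x Z1] rank_scale_le[of y Z2] assms(2,3)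
    by linarith
  define a where "a = W_norm eps G Z1"
  define b where "b = W_norm eps G Z2"
  have a2: "a\<^sup>2 = Ws Z1 Z1" and b2: "b\<^sup>2 = Ws Z2 Z2"
    using Wnn by (simp_all add: a_def b_def W_norm_def WW)

  have ann: "a \<ge> 0" "b \<ge> 0" using Wnn by (simp_all add: a_def b_def W_norm_def WW)
  have orth: "Ws Z1 Z2 = 0" using assms(5) WW by simp
  have lin: "A (x *\<^sub>R Z1 + y *\<^sub>R Z2) = x *\<^sub>R A Z1 + y *\<^sub>R A Z2" for x y
    using assms(6) by (simp add: linear_add linear_scale)
  have Kpos: "0 \<le> (1/\<nu> - 1/\<mu>) + (1/\<nu> + 1/\<mu>) * \<delta>"
  proof -
    have "1/\<mu> \<le> 1/\<nu>" using nupos nu_mu by (simp add: frac_le)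
    moreover have "0 \<le> (1/\<nu> + 1/\<mu>) * \<delta>" using nupos mupos rip(1) by simp
    ultimately show ?thesis by linarith
  qed
  have main: "\<bar>inner (A Z1) (A Z2)\<bar> \<le> 1/2 * ((1/\<nu> - 1/\<mu>) + (1/\<nu> + 1/\<mu>) * \<delta>) * a * b"
  proof (cases "a = 0 \<or> b = 0")
    case True
    then obtain Z where Z: "Z = Z1 \<or> Z = Z2" "Ws Z Z = 0" using a2 b2 by (metis power_zero_numeral)
    have "rank Z \<le> r1 + r2" using rk[of 1 0] rk[of 0 1] Z(1) by auto
    then have "(norm (A Z))\<^sup>2 \<le> (1 + \<delta>) * F Z" using rip(3) by blast
    moreover have "F Z \<le> 0" using Wlo[of Z] Z(2) nupos by (simp add: mult_le_0_iff)
    ultimately have "F Z = 0" using Fnn[of Z] by linarith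
    with \<open>(norm (A Z))\<^sup>2 \<le> (1 + \<delta>) * F Z\<close> have "(norm (A Z))\<^sup>2 \<le> 0" by simp
    then have "A Z = 0" by simp
    then have "inner (A Z1) (A Z2) = 0" using Z(1) by auto
    then show ?thesis using Kpos ann by simp
  next
    case False
    then have abpos: "a * b > 0" using ann by auto
    define U where "U = b *\<^sub>R Z1 + a *\<^sub>R Z2"
    define V where "V = b *\<^sub>R Z1 + (-a) *\<^sub>R Z2"
    have WU: "Ws U U = 2 * (a*b)\<^sup>2" unfolding U_def quad orth a2[symmetric] b2[symmetric] by (simp add: power_mult_distrib)
    have WV: "Ws V V = 2 * (a*b)\<^sup>2" unfolding V_def quad orth a2[symmetric] b2[symmetric] by (simp add: power_mult_distrib)
    have FU1: "F U \<le> 2 * (a*b)\<^sup>2 / \<nu>" using Wlo[of U] WU nupos by (subst pos_le_divide_eq) (auto simp: mult.commute)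
    have FU2: "2 * (a*b)\<^sup>2 / \<mu> \<le> F U" using Whi[of U] WU mupos by (subst pos_divide_le_eq) (auto simp: mult.commute)
    have FV1: "F V \<le> 2 * (a*b)\<^sup>2 / \<nu>" using Wlo[of V] WV nupos by (subst pos_le_divide_eq) (auto simp: mult.commute)
    have FV2: "2 * (a*b)\<^sup>2 / \<mu> \<le> F V" using Whi[of V] WV mupos by (subst pos_divide_le_eq) (auto simp: mult.commute)
    have RU: "(1 - \<delta>) * F U \<le> (norm (A U))\<^sup>2 \<and> (norm (A U))\<^sup>2 \<le> (1 + \<delta>) * F U"
      using rip(3) rk unfolding U_def by blast
    have RV: "(1 - \<delta>) * F V \<le> (norm (A V))\<^sup>2 \<and> (norm (A V))\<^sup>2 \<le> (1 + \<delta>) * F V"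
      using rip(3) rk unfolding V_def by blast
    have diff: "(norm (A U))\<^sup>2 - (norm (A V))\<^sup>2 = 4 * (a * b) * inner (A Z1) (A Z2)"
      unfolding U_def V_def lin norm_diff_sq by simp
    define c where "c = 2 * (a*b)\<^sup>2"
    have up: "(norm (A U))\<^sup>2 \<le> (1 + \<delta>) * (c / \<nu>)"
      using RU mult_left_mono[OF FU1, of "1+\<delta>"] rip(1) unfolding c_def by linarith
    have vp: "(norm (A V))\<^sup>2 \<le> (1 + \<delta>) * (c / \<nu>)"
      using RV mult_left_mono[OF FV1, of "1+\<delta>"] rip(1) unfolding c_def by linarith
    have ulo: "(1 - \<delta>) * (c / \<mu>) \<le> (norm (A U))\<^sup>2"
      using RU mult_left_mono[OF FU2, of "1-\<delta>"] rip(2) unfolding c_def by linarith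
    have vlo: "(1 - \<delta>) * (c / \<mu>) \<le> (norm (A V))\<^sup>2"
      using RV mult_left_mono[OF FV2, of "1-\<delta>"] rip(2) unfolding c_def by linarith
    have "\<bar>4 * (a * b) * inner (A Z1) (A Z2)\<bar> \<le> (1 + \<delta>) * (c / \<nu>) - (1 - \<delta>) * (c / \<mu>)"
      unfolding abs_le_iff using up vp ulo vlo diff by linarith
    also have "\<dots> = 4 * (a * b) * (1/2 * ((1/\<nu> - 1/\<mu>) + (1/\<nu> + 1/\<mu>) * \<delta>) * a * b)"
      unfolding c_def divide_inverse power2_eq_square by algebra
    finally have "4 * (a * b) * \<bar>inner (A Z1) (A Z2)\<bar> \<le> 4 * (a * b) * (1/2 * ((1/\<nu> - 1/\<mu>) + (1/\<nu> + 1/\<mu>) * \<delta>) * a * b)"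
      using abpos ann by (simp add: abs_mult)
    then show ?thesis by (rule mult_left_le_imp_le) (simp add: abpos)
  qed
  then show ?thesis by (simp add: Let_def \<nu>_def \<mu>_def a_def b_def)
qed

thm_deps lemma3p8

end
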